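(* In the setting below (with growth exponent $2$), assume $f(\cdot,\xi)$ is convex for all $\xi$ and that there is $L_{\mathrm Df,\mathcal U}>0$ with $\|\nabla g_\xi(u_2)-\nabla g_\xi(u_1)\|_{\mathcal U^*}\le L_{\mathrm Df,\mathcal U}\|u_2-u_1\|_{\mathcal U}$ for all $u_1,u_2\in\mathcal D(\psi)$, $\xi\in\Xi$. Then for all $N\in\mathbb N$, $$\mathbb E[G(u_N^* )-G(u^* )]\le\mathbb E[\Psi(u_N^* )]\le\Big(1+\Big(\frac1\theta+\frac{L_{\mathrm Df,\mathcal U}}{\theta^2}\Big)^2+\frac{4L_{\mathrm Df,\mathcal U}^2}{\theta^2}\Big)\frac{C_{\mathcal H;\mathcal U^*}^2\sigma_{\mathrm Df}^2}{N}.$$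
   Context: Let $U$ be a separable Hilbert space (identified with its dual, inner product $(\cdot,\cdot)_U$), $W$ a separable Banach space with dual $W^*$, and $B:U\to W$ a compact linear operator with adjoint $B^*$. Let $\psi:U\to[0,\infty]$ be proper, closed and convex with bounded domain $\mathcal D(\psi)=\{u:\psi(u)<\infty\}$. Let $U_0\subset U$ be open, convex and bounded with $\mathcal D(\psi)\subset U_0$. Let $\Xi$ be a complete separable metric space, $\boldsymbol\xi$ a $\Xi$-valued random element, and $\boldsymbol\xi^1,\boldsymbol\xi^2,\ldots$ i.i.d. copies of $\boldsymbol\xi$ on a complete probability space $(\Omega,\mathcal F,P)$. Let $f:B(U_0)\times\Xi\to\mathbb R$ be such that $f(\cdot,\xi)$ is continuous on $B(\mathcal D(\psi))$, $f(w,\cdot)$ is measurable, and $|f(Bu,\xi)|\le \zeta_f(\xi)$ on $U_0\times\Xi$ with $\zeta_f$ integrable. Assume: for each $\xi$, $g_\xi(u)=f(Bu,\xi)$ is continuously differentiable on $U_0$; there is a Carathéodory map $\mathrm D_wf:B(\mathcal D(\psi))\times\Xi\to W^*$ with $\nabla g_\xi(u)=B^*\mathrm D_wf(Bu,\xi)$ on $\mathcal D(\psi)\times\Xi$; there is an integrable $\zeta_{\mathrm Df}$ with $\|\nabla g_\xi(u)\|_U\le\zeta_{\mathrm Df}(\xi)$ on $U_0\times\Xi$ and $\|\mathrm D_wf(Bu,\xi)\|_{W^*}\le\zeta_{\mathrm Df}(\xi)$ on $\mathcal D(\psi)\times\Xi$. Let $F(w)=\mathbb E[f(w,\boldsymbol\xi)]$,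 $\mathrm DF(w)=\mathbb E[\mathrm D_wf(w,\boldsymbol\xi)]$, $G(u)=F(Bu)+\psi(u)$, $\hat F_N(w)=\frac1N\sum_{i=1}^Nf(w,\boldsymbol\xi^i)$, and $\Psi(u)=\sup_{v\in\mathcal D(\psi)}[(B^*\mathrm DF(Bu),u-v)_U+\psi(u)-\psi(v)]$ for $u\in\mathcal D(\psi)$. Let $u^*$ be a solution of $\min_{u\in U}G(u)$ and for each $N$ let $u_N^*:\Omega\to U$ be measurable with $u_N^*(\omega)$ a solution of $\min_{u\in U}\hat F_N(Bu,\omega)+\psi(u)$. Further assume: $\mathcal U$ is a Banach space with $\mathcal U^*\hookrightarrow U\hookrightarrow\mathcal U$, $\mathcal H$ is a separable Hilbert space with $\mathcal H\hookrightarrow\mathcal U^*$ (embedding constant $C_{\mathcal H;\mathcal U^*}$), and $|(v,u)_U|\le\|v\|_{\mathcal U^*}\|u\|_{\mathcal U}$ for all $v\in\mathcal U^*$, $u\in U$; there is $\theta>0$ with $(B^*\mathrm DF(Bu^* ),u-u^* )_U+\psi(u)-\psi(u^* )\ge\theta\|u-u^*\|_{\mathcal U}^{2}$ for all $u\in U$; the map $\xi\mapsto\nabla g_\xi(u^* )\in\mathcal H$ is integrable and $\sigma_{\mathrm Df}=(\mathbb E[\|\nabla g_{\boldsymbol\xi}(u^* )-\mathbb E[\nabla g_{\boldsymbol\xi}(u^* )]\|_{\mathcal H}^2])^{1/2}<\infty$. *)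

theory Defs
  imports "HOL-Probability.Probability"
begin

text \<open>Hilbert-space adjoint of a bounded linear operator B : U \<rightarrow> W, acting on W* (represented
  as bounded linear functionals 'w \<Rightarrow>L real), via the Riesz identification of U with its dual:
  (adj B phi, u)_U = phi (B u) for all u.\<close>
definition adj :: "('u::real_inner \<Rightarrow> 'w::real_normed_vector) \<Rightarrow> ('w \<Rightarrow>\<^sub>L real) \<Rightarrow> 'u" where
  "adj B phi = (THE v. \<forall>u. inner v u = blinfun_apply phi (B u))"

definition edom :: "('u \<Rightarrow> ereal) \<Rightarrow> 'u set" where
  "edom psi = {u. psi u < \<infinity>}"

definition compact_operator :: "('u::real_normed_vector \<Rightarrow> 'w::real_normed_vector) \<Rightarrow> bool" where
  "compact_operator B \<longleftrightarrow> bounded_linear B \<and> compact (closure (B ` ball 0 1))"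

definition proper_closed_convex :: "('u::real_normed_vector \<Rightarrow> ereal) \<Rightarrow> bool" where
  "proper_closed_convex psi \<longleftrightarrow>
     (\<exists>u. psi u < \<infinity>) \<and> (\<forall>u. psi u > -\<infinity>) \<and>
     closed {(u, c::real). psi u \<le> ereal c} \<and> convex {(u, c::real). psi u \<le> ereal c}"

definition Fexp :: "'om measure \<Rightarrow> ('om \<Rightarrow> 'x) \<Rightarrow> ('w \<Rightarrow> 'x \<Rightarrow> real) \<Rightarrow> 'w \<Rightarrow> real" where
  "Fexp P xi f w = (\<integral>om. f w (xi om) \<partial>P)"

text \<open>DF(w) = E[D_w f(w,xi)] in W*; the expectation of the W*-valued map is taken pointwise
  (Pettis / weak-star sense), which coincides with the Bochner integral whenever the latter exists.\<close>
definition DFexp :: "'om measure \<Rightarrow> ('om \<Rightarrow> 'x) \<Rightarrow> ('w::real_normed_vector \<Rightarrow> 'x \<Rightarrow> ('w \<Rightarrow>\<^sub>L real)) \<Rightarrow> 'w \<Rightarrow> ('w \<Rightarrow>\<^sub>L real)" where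
  "DFexp P xi Df w = Blinfun (\<lambda>z. \<integral>om. blinfun_apply (Df w (xi om)) z \<partial>P)"

definition Gobj :: "'om measure \<Rightarrow> ('om \<Rightarrow> 'x) \<Rightarrow> ('w \<Rightarrow> 'x \<Rightarrow> real) \<Rightarrow> ('u \<Rightarrow> 'w) \<Rightarrow> ('u \<Rightarrow> ereal) \<Rightarrow> 'u \<Rightarrow> ereal" where
  "Gobj P xi f B psi u = ereal (Fexp P xi f (B u)) + psi u"

definition Fhat :: "nat \<Rightarrow> (nat \<Rightarrow> 'om \<Rightarrow> 'x) \<Rightarrow> ('w \<Rightarrow> 'x \<Rightarrow> real) \<Rightarrow> 'w \<Rightarrow> 'om \<Rightarrow> real" where
  "Fhat N xis f w om = (1 / real N) * (\<Sum>i\<in>{1..N}. f w (xis i om))"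

definition Psi_crit :: "'om measure \<Rightarrow> ('om \<Rightarrow> 'x) \<Rightarrow> ('w::real_normed_vector \<Rightarrow> 'x \<Rightarrow> ('w \<Rightarrow>\<^sub>L real))
     \<Rightarrow> ('u::real_inner \<Rightarrow> 'w) \<Rightarrow> ('u \<Rightarrow> ereal) \<Rightarrow> 'u \<Rightarrow> ereal" where
  "Psi_crit P xi Df B psi u =
     (SUP v\<in>edom psi. ereal (inner (adj B (DFexp P xi Df (B u))) (u - v)) + psi u - psi v)"

end

theory Submission
  imports Defs
begin



lemma parallelogram_law:
  fixes a b :: "'a::real_inner"
  shows "(norm (a + b))\<^sup>2 + (norm (a - b))\<^sup>2 = 2 * (norm a)\<^sup>2 + 2 * (norm b)\<^sup>2"
  unfolding power2_norm_eq_inner inner_add_left inner_add_right inner_diff_left inner_diff_right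
  by (simp add: inner_commute[of b a])

lemma riesz_exists:
  fixes phi :: "'a::{real_inner, complete_space} \<Rightarrow> real"
  assumes bl: "bounded_linear phi"
  shows "\<exists>v. \<forall>z. inner v z = phi z"
proof (cases "\<forall>z. phi z = 0")
  case True
  then show ?thesis by (intro exI[of _ 0]) simp
next
  case False
  interpret phi: bounded_linear phi by fact
  from False obtain y where y: "phi y \<noteq> 0" by auto
  define K where "K = {k. phi k = 0}"
  have K0: "0 \<in> K" by (simp add: K_def)
  have Kadd: "a + b \<in> K" if "a \<in> K" "b \<in> K" for a b using that by (simp add: K_def phi.add)
  have Kscale: "c *\<^sub>R a \<in> K" if "a \<in> K" for a c using that by (simp add: K_def phi.scale)
  have Kclosed: "closed K"
  proof -
    have "closed (phi -` {0})" by (rule continuous_closed_vimage) (auto simp: bl linear_continuous_at)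
    moreover have "phi -` {0} = K" by (auto simp: K_def)
    ultimately show ?thesis by simp
  qed
  define D where "D = {(norm (y - k))\<^sup>2 | k. k \<in> K}"
  define delta where "delta = Inf D"
  have Dne: "D \<noteq> {}" using K0 by (auto simp: D_def)
  have Dbdd: "bdd_below D" by (auto simp: D_def bdd_below_def intro!: exI[of _ 0])
  have delta_le: "delta \<le> (norm (y - k))\<^sup>2" if "k \<in> K" for k
    unfolding delta_def using that Dbdd by (intro cInf_lower) (auto simp: D_def)
  have "\<exists>k\<in>K. (norm (y - k))\<^sup>2 < delta + 1 / (real n + 1)" for n
  proof -
    have "delta < delta + 1 / (real n + 1)" by simp
    then obtain x where "x \<in> D" "x < delta + 1 / (real n + 1)"
      using cInf_lessD[OF Dne] unfolding delta_def by blast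
    then show ?thesis by (auto simp: D_def)
  qed
  then obtain ks where ksK: "\<And>n. ks n \<in> K" and ks: "\<And>n. (norm (y - ks n))\<^sup>2 < delta + 1 / (real n + 1)"
    by metis
  have par: "(norm (ks n - ks m))\<^sup>2 \<le> 2 / (real n + 1) + 2 / (real m + 1)" for n m
  proof -
    have mid: "(1/2) *\<^sub>R (ks n + ks m) \<in> K" using ksK Kadd Kscale by blast
    have pl: "(norm ((y - ks n) + (y - ks m)))\<^sup>2 + (norm ((y - ks n) - (y - ks m)))\<^sup>2
        = 2 * (norm (y - ks n))\<^sup>2 + 2 * (norm (y - ks m))\<^sup>2"
      by (rule parallelogram_law)
    have e1: "(y - ks n) + (y - ks m) = 2 *\<^sub>R (y - (1/2) *\<^sub>R (ks n + ks m))"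
      by (simp add: algebra_simps scaleR_2)
    have e2: "(norm (2 *\<^sub>R (y - (1/2) *\<^sub>R (ks n + ks m))))\<^sup>2 = 4 * (norm (y - (1/2) *\<^sub>R (ks n + ks m)))\<^sup>2"
      by (simp add: power2_eq_square)
    have e3: "norm ((y - ks n) - (y - ks m)) = norm (ks n - ks m)"
      by (simp add: norm_minus_commute)
    have "(norm (ks n - ks m))\<^sup>2 = 2 * (norm (y - ks n))\<^sup>2 + 2 * (norm (y - ks m))\<^sup>2 - 4 * (norm (y - (1/2) *\<^sub>R (ks n + ks m)))\<^sup>2"
      using pl unfolding e1 e2 e3 by linarith
    with delta_le[OF mid] ks[of n] ks[of m] show ?thesis by linarith
  qed
  have cauchy: "Cauchy ks"
  proof (rule metric_CauchyI)
    fix e :: real assume e: "e > 0"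
    obtain M :: nat where M: "4 / e\<^sup>2 < real M" using reals_Archimedean2 by blast
    show "\<exists>M. \<forall>m\<ge>M. \<forall>n\<ge>M. dist (ks m) (ks n) < e"
    proof (intro exI allI impI)
      fix m n assume mn: "M \<le> m" "M \<le> n"
      have e2: "e\<^sup>2 > 0" using e by simp
      have "2 / (real m + 1) \<le> 2 / (real M + 1)" "2 / (real n + 1) \<le> 2 / (real M + 1)"
        using mn by (auto intro!: divide_left_mono)
      moreover have "4 / (real M + 1) < e\<^sup>2"
      proof -
        have "4 / e\<^sup>2 < real M + 1" using M by simp
        then have "4 < e\<^sup>2 * (real M + 1)" using e2 by (simp add: divide_less_eq mult.commute)
        then show ?thesis by (simp add: divide_less_eq mult.commute)
      qed
      ultimately have "(norm (ks m - ks n))\<^sup>2 < e\<^sup>2" using par[of m n] by linarith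
      then have "norm (ks m - ks n) < e" using e by (simp add: power_less_imp_less_base)
      then show "dist (ks m) (ks n) < e" by (simp add: dist_norm)
    qed
  qed
  then obtain p where lim: "ks \<longlonglongrightarrow> p" using convergent_eq_Cauchy by blast
  have pK: "p \<in> K" using Kclosed ksK lim closed_sequentially by blast
  have pmin: "(norm (y - p))\<^sup>2 \<le> delta"
  proof -
    have l1: "(\<lambda>n. (norm (y - ks n))\<^sup>2) \<longlonglongrightarrow> (norm (y - p))\<^sup>2"
      by (intro tendsto_intros lim)
    have l0: "(\<lambda>n. 1 / (real n + 1)) \<longlonglongrightarrow> 0"
      using LIMSEQ_inverse_real_of_nat by (simp add: inverse_eq_divide add.commute)
    have l2: "(\<lambda>n. delta + 1 / (real n + 1)) \<longlonglongrightarrow> delta + 0"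
      by (intro tendsto_intros l0)
    show ?thesis using l1 l2 ks by (intro LIMSEQ_le[OF l1]) (auto intro: less_imp_le)
  qed
  define w where "w = y - p"
  have phiw: "phi w = phi y" using pK by (simp add: w_def K_def phi.diff)
  have worth: "inner w k = 0" if "k \<in> K" for k
  proof (cases "k = 0")
    case True then show ?thesis by simp
  next
    case False
    define t where "t = inner w k / inner k k"
    have kk: "inner k k > 0" using False by simp
    have "p + t *\<^sub>R k \<in> K" using pK that Kadd Kscale by blast
    then have "delta \<le> (norm (y - (p + t *\<^sub>R k)))\<^sup>2" by (rule delta_le)
    also have "(norm (y - (p + t *\<^sub>R k)))\<^sup>2 = (norm (w - t *\<^sub>R k))\<^sup>2" by (simp add: w_def algebra_simps)
    also have "\<dots> = (norm w)\<^sup>2 - 2 * t * inner w k + t\<^sup>2 * inner k k"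
      unfolding power2_norm_eq_inner inner_diff_left inner_diff_right inner_scaleR_left inner_scaleR_right by (simp add: inner_commute[of k w] power2_eq_square algebra_simps)
    also have "\<dots> = (norm w)\<^sup>2 - (inner w k)\<^sup>2 / inner k k"
      using kk by (simp add: t_def power2_eq_square field_simps)
    finally have "(inner w k)\<^sup>2 / inner k k \<le> 0" using pmin by (simp add: w_def)
    then have "(inner w k)\<^sup>2 \<le> 0" using kk by (simp add: divide_le_0_iff)
    then show ?thesis by simp
  qed
  have w0: "inner w w \<noteq> 0" using phiw y by auto
  show ?thesis
  proof (intro exI allI)
    fix z
    have "z - (phi z / phi w) *\<^sub>R w \<in> K" using phiw y by (simp add: K_def phi.diff phi.scale)
    then have "inner w (z - (phi z / phi w) *\<^sub>R w) = 0" by (rule worth)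
    then have "inner w z = (phi z / phi w) * inner w w" by (simp add: inner_diff_right)
    then show "inner ((phi w / inner w w) *\<^sub>R w) z = phi z"
      using w0 phiw y by (simp add: field_simps)
  qed
qed

lemma adj_prop:
  fixes B :: "'u::{real_inner, complete_space} \<Rightarrow> 'w::real_normed_vector"
  assumes "bounded_linear B"
  shows "inner (adj B phi) z = blinfun_apply phi (B z)"
proof -
  have "bounded_linear (\<lambda>z. blinfun_apply phi (B z))"
    using assms by (intro bounded_linear_compose[OF blinfun.bounded_linear_right])
  then obtain v where v: "\<forall>z. inner v z = blinfun_apply phi (B z)" using riesz_exists by blast
  have uniq: "v' = v" if "\<forall>z. inner v' z = blinfun_apply phi (B z)" for v'
  proof -
    have "inner (v' - v) (v' - v) = 0" using that v by (simp add: inner_diff_left)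
    then show ?thesis by simp
  qed
  have "adj B phi = v" unfolding adj_def
  proof (rule the_equality)
    show "\<forall>z. inner v z = blinfun_apply phi (B z)" by (rule v)
  next
    fix v' assume "\<forall>z. inner v' z = blinfun_apply phi (B z)"
    then show "v' = v" by (rule uniq)
  qed
  with v show ?thesis by simp
qed


lemma deriv_right_bounds:
  fixes h :: "real \<Rightarrow> real"
  assumes d: "(h has_derivative (\<lambda>s. s * D)) (at 0)"
  shows "(\<And>t. 0 < t \<Longrightarrow> t \<le> 1 \<Longrightarrow> c * t \<le> h t - h 0) \<Longrightarrow> c \<le> D"
    and "(\<And>t. 0 < t \<Longrightarrow> t \<le> 1 \<Longrightarrow> h t - h 0 \<le> c * t) \<Longrightarrow> D \<le> c"
proof -
  have "(h has_field_derivative D) (at 0)"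
  proof -
    have "(\<lambda>s. s * D) = (*) D" by (auto simp: fun_eq_iff)
    then show ?thesis using d by (simp add: has_field_derivative_def)
  qed
  then have "((\<lambda>t. (h t - h 0) / (t - 0)) \<longlongrightarrow> D) (at 0)"
    by (simp add: DERIV_def)
  then have lim: "((\<lambda>t. (h t - h 0) / t) \<longlongrightarrow> D) (at_right 0)"
    by (simp add: filterlim_at_split)
  have ev: "eventually (\<lambda>t. 0 < t \<and> t \<le> 1) (at_right (0::real))"
    by (simp add: eventually_at_right_field) (intro exI[of _ 1], auto)
  show "c \<le> D" if H: "\<And>t. 0 < t \<Longrightarrow> t \<le> 1 \<Longrightarrow> c * t \<le> h t - h 0"
  proof (rule tendsto_lowerbound[OF lim])
    show "\<forall>\<^sub>F t in at_right 0. c \<le> (h t - h 0) / t"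
      using ev by eventually_elim (use H in \<open>auto simp: pos_le_divide_eq\<close>)
  qed simp
  show "D \<le> c" if H: "\<And>t. 0 < t \<Longrightarrow> t \<le> 1 \<Longrightarrow> h t - h 0 \<le> c * t"
  proof (rule tendsto_upperbound[OF lim])
    show "\<forall>\<^sub>F t in at_right 0. (h t - h 0) / t \<le> c"
      using ev by eventually_elim (use H in \<open>auto simp: pos_divide_le_eq\<close>)
  qed simp
qed

lemma line_derivative:
  fixes g :: "'u::real_inner \<Rightarrow> real"
  assumes "(g has_derivative (\<lambda>h. inner G h)) (at u)"
  shows "((\<lambda>t. g (u + t *\<^sub>R (w - u))) has_derivative (\<lambda>s. s * inner G (w - u))) (at 0)"
proof -
  have l: "((\<lambda>t::real. u + t *\<^sub>R (w - u)) has_derivative (\<lambda>s. s *\<^sub>R (w - u))) (at 0)"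
    by (auto intro!: derivative_eq_intros)
  have g: "(g has_derivative (\<lambda>h. inner G h)) (at (u + 0 *\<^sub>R (w - u)))" using assms by simp
  from has_derivative_compose[OF l g] show ?thesis by (simp add: o_def)
qed

lemma convex_tangent:
  fixes g :: "'u::real_inner \<Rightarrow> real"
  assumes cv: "convex_on S g" and S: "convex S" and uS: "u \<in> S" and wS: "w \<in> S"
    and d: "(g has_derivative (\<lambda>h. inner G h)) (at u)"
  shows "g u + inner G (w - u) \<le> g w"
proof -
  have "inner G (w - u) \<le> g w - g u"
  proof (rule deriv_right_bounds(2)[OF line_derivative[OF d]])
    fix t :: real assume t: "0 < t" "t \<le> 1"
    have "g ((1 - t) *\<^sub>R u + t *\<^sub>R w) \<le> (1 - t) * g u + t * g w"
      using t uS wS by (intro convex_onD[OF cv]) auto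
    moreover have "u + t *\<^sub>R (w - u) = (1 - t) *\<^sub>R u + t *\<^sub>R w" by (simp add: algebra_simps)
    ultimately show "g (u + t *\<^sub>R (w - u)) - g (u + 0 *\<^sub>R (w - u)) \<le> (g w - g u) * t"
      by (simp add: algebra_simps)
  qed
  then show ?thesis by simp
qed



lemma has_bochner_integral_distr_gen:
  fixes f :: "'b \<Rightarrow> 'c::{real_normed_vector, second_countable_topology}"
  assumes g: "g \<in> measurable M N" and hb: "has_bochner_integral (distr M N g) f x"
  shows "has_bochner_integral M (\<lambda>y. f (g y)) x"
proof -
  from hb obtain s where fm: "f \<in> borel_measurable (distr M N g)"
    and s: "\<And>i. Bochner_Integration.simple_bochner_integrable (distr M N g) (s i)"
    and lim1: "(\<lambda>i. \<integral>\<^sup>+z. norm (f z - s i z) \<partial>distr M N g) \<longlonglongrightarrow> 0"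
    and lim2: "(\<lambda>i. Bochner_Integration.simple_bochner_integral (distr M N g) (s i)) \<longlonglongrightarrow> x"
    by (elim has_bochner_integral.cases) auto
  have fm': "f \<in> borel_measurable N" using fm by simp
  have gsp: "g y \<in> space N" if "y \<in> space M" for y using g that by (auto simp: measurable_def)
  have sfN: "simple_function N (s i)" and fin: "emeasure (distr M N g) {z \<in> space N. s i z \<noteq> 0} \<noteq> \<infinity>" for i
  proof -
    from s[of i] have sf: "simple_function (distr M N g) (s i)"
      and fin0: "emeasure (distr M N g) {z \<in> space (distr M N g). s i z \<noteq> 0} \<noteq> \<infinity>"
      by (auto elim: Bochner_Integration.simple_bochner_integrable.cases)
    show "simple_function N (s i)" using sf by (subst simple_function_cong_algebra[of "distr M N g" N]) auto
    show "emeasure (distr M N g) {z \<in> space N. s i z \<noteq> 0} \<noteq> \<infinity>" using fin0 by simp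
  qed
  have sm: "s i \<in> borel_measurable N" for i by (rule borel_measurable_simple_function[OF sfN])
  have pre: "g -` {z \<in> space N. P z} \<inter> space M = {y \<in> space M. P (g y)}" for P
    using gsp by auto
  have setN: "{z \<in> space N. s i z = v} \<in> sets N" "{z \<in> space N. s i z \<noteq> 0} \<in> sets N" for i v
    using sm[of i] by measurable
  show ?thesis
  proof (rule has_bochner_integral.intros[where s="\<lambda>i y. s i (g y)"])
    show "(\<lambda>y. f (g y)) \<in> borel_measurable M" using measurable_compose[OF g fm'] .
  next
    fix i
    show "Bochner_Integration.simple_bochner_integrable M (\<lambda>y. s i (g y))"
    proof (rule Bochner_Integration.simple_bochner_integrable.intros)
      show "simple_function M (\<lambda>y. s i (g y))" by (rule simple_function_comp[OF g sfN])
      have "emeasure (distr M N g) {z \<in> space N. s i z \<noteq> 0} = emeasure M (g -` {z \<in> space N. s i z \<noteq> 0} \<inter> space M)"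
        by (rule emeasure_distr[OF g setN(2)])
      then have "emeasure M {y \<in> space M. s i (g y) \<noteq> 0} = emeasure (distr M N g) {z \<in> space N. s i z \<noteq> 0}"
        unfolding pre by simp
      then show "emeasure M {y \<in> space M. s i (g y) \<noteq> 0} \<noteq> \<infinity>" using fin[of i] by simp
    qed
  next
    have "(\<integral>\<^sup>+y. norm (f (g y) - s i (g y)) \<partial>M) = (\<integral>\<^sup>+z. norm (f z - s i z) \<partial>distr M N g)" for i
      using fm' sm[of i] g by (subst nn_integral_distr) auto
    then show "(\<lambda>i. \<integral>\<^sup>+y. norm (f (g y) - s i (g y)) \<partial>M) \<longlonglongrightarrow> 0" using lim1 by simp
  next
    have "Bochner_Integration.simple_bochner_integral M (\<lambda>y. s i (g y)) = Bochner_Integration.simple_bochner_integral (distr M N g) (s i)" for i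
    proof -
      have meq: "measure (distr M N g) {z \<in> space N. s i z = v} = measure M {y \<in> space M. s i (g y) = v}" for v
        using measure_distr[OF g setN(1)[of i v]] unfolding pre .
      have finN: "finite (s i ` space N)" using sfN[of i] by (rule simple_functionD(1))
      have sub: "(\<lambda>y. s i (g y)) ` space M \<subseteq> s i ` space N" using gsp by auto
      have "Bochner_Integration.simple_bochner_integral (distr M N g) (s i) = (\<Sum>v\<in>s i ` space N. measure M {y \<in> space M. s i (g y) = v} *\<^sub>R v)"
        unfolding simple_bochner_integral_def by (simp add: meq)
      also have "\<dots> = (\<Sum>v\<in>(\<lambda>y. s i (g y)) ` space M. measure M {y \<in> space M. s i (g y) = v} *\<^sub>R v)"
      proof (rule sum.mono_neutral_right[OF finN sub])
        show "\<forall>v\<in>s i ` space N - (\<lambda>y. s i (g y)) ` space M. measure M {y \<in> space M. s i (g y) = v} *\<^sub>R v = 0"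
        proof
          fix v assume "v \<in> s i ` space N - (\<lambda>y. s i (g y)) ` space M"
          then have E: "{y \<in> space M. s i (g y) = v} = {}" by (auto simp: image_iff)
          show "measure M {y \<in> space M. s i (g y) = v} *\<^sub>R v = 0" unfolding E by simp
        qed
      qed
      finally show ?thesis unfolding simple_bochner_integral_def by simp
    qed
    then show "(\<lambda>i. Bochner_Integration.simple_bochner_integral M (\<lambda>y. s i (g y))) \<longlonglongrightarrow> x" using lim2 by simp
  qed
qed

lemma integrable_distr_gen:
  fixes f :: "'b \<Rightarrow> 'c::{real_normed_vector, second_countable_topology}"
  assumes g: "g \<in> measurable M N" and i: "integrable (distr M N g) f"
  shows "integrable M (\<lambda>y. f (g y))" and "integral\<^sup>L M (\<lambda>y. f (g y)) = integral\<^sup>L (distr M N g) f"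
proof -
  have "has_bochner_integral M (\<lambda>y. f (g y)) (integral\<^sup>L (distr M N g) f)"
    by (rule has_bochner_integral_distr_gen[OF g has_bochner_integral_integrable[OF i]])
  then show "integrable M (\<lambda>y. f (g y))" "integral\<^sup>L M (\<lambda>y. f (g y)) = integral\<^sup>L (distr M N g) f"
    by (auto simp: has_bochner_integral_iff)
qed


lemma inner_le_sq_sum: "\<bar>inner (a::'a::real_inner) b\<bar> \<le> (norm a)\<^sup>2 + (norm b)\<^sup>2"
proof -
  have "\<bar>inner a b\<bar> \<le> norm a * norm b" by (rule Cauchy_Schwarz_ineq2)
  also have "\<dots> \<le> (norm a)\<^sup>2 + (norm b)\<^sup>2"
  proof -
    have "0 \<le> (norm a - norm b)\<^sup>2" by simp
    then have "2 * (norm a * norm b) \<le> (norm a)\<^sup>2 + (norm b)\<^sup>2" unfolding power2_diff by simp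
    moreover have "0 \<le> norm a * norm b" by simp
    ultimately show ?thesis by linarith
  qed
  finally show ?thesis .
qed

lemma variance_of_mean:
  fixes P :: "'om measure" and xi :: "'om \<Rightarrow> 'x::polish_space" and xis :: "nat \<Rightarrow> 'om \<Rightarrow> 'x"
    and hg :: "'x \<Rightarrow> 'h::{real_inner, polish_space}"
  assumes prob: "prob_space P"
    and xi_meas: "xi \<in> measurable P borel"
    and xis_meas: "\<And>i. i \<ge> 1 \<Longrightarrow> xis i \<in> measurable P borel"
    and xis_indep: "prob_space.indep_vars P (\<lambda>_. borel) xis {1..}"
    and xis_distr: "\<And>i. i \<ge> 1 \<Longrightarrow> distr P borel (xis i) = distr P borel xi"
    and hg_int: "integrable (distr P borel xi) hg"
    and hg_var: "integrable P (\<lambda>om. (norm (hg (xi om) - (\<integral>om'. hg (xi om') \<partial>P)))\<^sup>2)"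
    and N: "N \<ge> 1"
  defines "m \<equiv> (\<integral>om'. hg (xi om') \<partial>P)"
    and "s2 \<equiv> (\<integral>om. (norm (hg (xi om) - (\<integral>om'. hg (xi om') \<partial>P)))\<^sup>2 \<partial>P)"
  shows "integrable P (\<lambda>om. (norm ((1 / real N) *\<^sub>R (\<Sum>i\<in>{1..N}. hg (xis i om)) - m))\<^sup>2)"
    and "(\<integral>om. (norm ((1 / real N) *\<^sub>R (\<Sum>i\<in>{1..N}. hg (xis i om)) - m))\<^sup>2 \<partial>P) = s2 / real N"
proof -
  interpret prob_space P by fact
  let ?mu = "distr P borel xi"
  have hg_meas[measurable]: "hg \<in> borel_measurable borel"
  proof -
    have "hg \<in> borel_measurable (distr P borel xi)" by (rule borel_measurable_integrable[OF hg_int])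
    moreover have "borel_measurable (distr P borel xi) = (borel_measurable borel :: ('x \<Rightarrow> _) set)"
      by (rule measurable_cong_sets) auto
    ultimately show ?thesis by simp
  qed
  note xi_meas[measurable]
  define Y where "Y i om = hg (xis i om) - m" for i om
  define q where "q x = (norm (hg x - m))\<^sup>2" for x
  have q_meas[measurable]: "q \<in> borel_measurable borel" unfolding q_def by measurable
  have q_mu: "integrable ?mu q"
    using hg_var by (subst integrable_distr_eq) (auto simp: q_def m_def)
  have hgxi: "integrable P (\<lambda>om. hg (xi om))"
    by (rule integrable_distr_gen(1)[OF xi_meas hg_int])
  have Yint: "integrable P (\<lambda>om. (norm (Y i om))\<^sup>2)" and Ysq: "(\<integral>om. (norm (Y i om))\<^sup>2 \<partial>P) = s2"
    if i: "i \<ge> 1" for i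
  proof -
    note xis_meas[OF i, measurable]
    have "integrable (distr P borel (xis i)) q" using q_mu xis_distr[OF i] by simp
    then show "integrable P (\<lambda>om. (norm (Y i om))\<^sup>2)"
      by (subst (asm) integrable_distr_eq) (auto simp: q_def Y_def)
    have "(\<integral>om. (norm (Y i om))\<^sup>2 \<partial>P) = (\<integral>x. q x \<partial>distr P borel (xis i))"
      by (subst integral_distr) (auto simp: q_def Y_def)
    also have "\<dots> = (\<integral>x. q x \<partial>?mu)" using xis_distr[OF i] by simp
    also have "\<dots> = s2" by (subst integral_distr) (auto simp: q_def s2_def m_def)
    finally show "(\<integral>om. (norm (Y i om))\<^sup>2 \<partial>P) = s2" .
  qed
  have Ymeas[measurable]: "(\<lambda>om. Y i om) \<in> borel_measurable P" if "i \<ge> 1" for i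
    using xis_meas[OF that] unfolding Y_def by measurable
  have YYint: "integrable P (\<lambda>om. inner (Y i om) (Y j om))" if "i \<ge> 1" "j \<ge> 1" for i j
  proof (rule Bochner_Integration.integrable_bound)
    show "integrable P (\<lambda>om. (norm (Y i om))\<^sup>2 + (norm (Y j om))\<^sup>2)"
      using Yint that by auto
    show "(\<lambda>om. inner (Y i om) (Y j om)) \<in> borel_measurable P" using that by measurable
    show "AE om in P. norm (inner (Y i om) (Y j om)) \<le> norm ((norm (Y i om))\<^sup>2 + (norm (Y j om))\<^sup>2)"
      using inner_le_sq_sum by auto
  qed
  have YY0: "(\<integral>om. inner (Y i om) (Y j om) \<partial>P) = 0" if ij: "i \<ge> 1" "j \<ge> 1" "i \<noteq> j" for i j
  proof -
    note xis_meas[OF ij(1), measurable] xis_meas[OF ij(2), measurable]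
    have "indep_var (Pi\<^sub>M {i} (\<lambda>_. borel)) (\<lambda>\<omega>. restrict (\<lambda>k. xis k \<omega>) {i})
                    (Pi\<^sub>M {j} (\<lambda>_. borel)) (\<lambda>\<omega>. restrict (\<lambda>k. xis k \<omega>) {j})"
      using ij by (intro indep_var_restrict[OF xis_indep]) auto
    from indep_var_compose[OF this, of "\<lambda>f. f i" borel "\<lambda>f. f j" borel]
    have ind: "indep_var borel (xis i) borel (xis j)"
      by (simp add: o_def measurable_component_singleton)
    then have prod: "distr P borel (xis i) \<Otimes>\<^sub>M distr P borel (xis j) = distr P (borel \<Otimes>\<^sub>M borel) (\<lambda>x. (xis i x, xis j x))"
      using indep_var_distribution_eq by blast
    then have prod': "?mu \<Otimes>\<^sub>M ?mu = distr P (borel \<Otimes>\<^sub>M borel) (\<lambda>x. (xis i x, xis j x))"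
      using xis_distr ij by simp
    define H where "H z = inner (hg (fst z) - m) (hg (snd z) - m)" for z
    have Hmeas[measurable]: "H \<in> borel_measurable (borel \<Otimes>\<^sub>M borel)" unfolding H_def by measurable
    interpret mu: prob_space ?mu by (rule prob_space_distr) simp
    interpret pair_sigma_finite ?mu ?mu ..
    have Hint: "integrable (?mu \<Otimes>\<^sub>M ?mu) H"
      unfolding prod' using YYint[OF ij(1,2)]
      by (subst integrable_distr_eq) (auto simp: H_def Y_def)
    have "(\<integral>om. inner (Y i om) (Y j om) \<partial>P) = (\<integral>z. H z \<partial>(?mu \<Otimes>\<^sub>M ?mu))"
      unfolding prod' by (subst integral_distr) (auto simp: H_def Y_def)
    also have "\<dots> = (\<integral>x. (\<integral>y. H (x, y) \<partial>?mu) \<partial>?mu)"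
      using integral_fst'[OF Hint] by simp
    also have "\<dots> = (\<integral>x. 0 \<partial>?mu)"
    proof (rule Bochner_Integration.integral_cong[OF refl])
      fix x
      define c where "c = hg x - m"
      have bl: "bounded_linear (\<lambda>h. inner c h)" by (rule bounded_linear_inner_right)
      have rP: "integrable P (\<lambda>om. inner c (hg (xi om)))"
        by (rule integrable_bounded_linear[OF bl hgxi])
      have rmu: "integrable ?mu (\<lambda>y. inner c (hg y))"
        using rP by (subst integrable_distr_eq) auto
      have rval: "(\<integral>y. inner c (hg y) \<partial>?mu) = inner c m"
      proof -
        have "(\<integral>y. inner c (hg y) \<partial>?mu) = (\<integral>om. inner c (hg (xi om)) \<partial>P)"
          by (subst integral_distr) auto
        also have "\<dots> = inner c m" unfolding m_def by (rule integral_bounded_linear[OF bl hgxi])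
        finally show ?thesis .
      qed
      have "(\<integral>y. H (x, y) \<partial>?mu) = (\<integral>y. inner c (hg y) - inner c m \<partial>?mu)"
        by (simp add: H_def c_def inner_diff_right)
      also have "\<dots> = (\<integral>y. inner c (hg y) \<partial>?mu) - (\<integral>y. inner c m \<partial>?mu)"
        using rmu by (rule Bochner_Integration.integral_diff) simp
      also have "\<dots> = 0" using rval mu.prob_space by simp
      finally show "(\<integral>y. H (x, y) \<partial>?mu) = 0" by simp
    qed
    finally show ?thesis by simp
  qed
  have Npos: "real N > 0" using N by simp
  have eq: "(norm ((1 / real N) *\<^sub>R (\<Sum>i\<in>{1..N}. hg (xis i om)) - m))\<^sup>2
        = (1 / real N)\<^sup>2 * (\<Sum>i\<in>{1..N}. \<Sum>j\<in>{1..N}. inner (Y i om) (Y j om))" for om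
  proof -
    have "(\<Sum>i\<in>{1..N}. Y i om) = (\<Sum>i\<in>{1..N}. hg (xis i om)) - real N *\<^sub>R m"
      by (simp add: Y_def sum_subtractf sum_constant_scaleR)
    then have "(1 / real N) *\<^sub>R (\<Sum>i\<in>{1..N}. Y i om) = (1 / real N) *\<^sub>R (\<Sum>i\<in>{1..N}. hg (xis i om)) - ((1 / real N) * real N) *\<^sub>R m"
      by (simp add: scaleR_diff_right)
    also have "(1 / real N) * real N = 1" using Npos by simp
    finally have "(1 / real N) *\<^sub>R (\<Sum>i\<in>{1..N}. hg (xis i om)) - m = (1 / real N) *\<^sub>R (\<Sum>i\<in>{1..N}. Y i om)"
      by simp
    then have "(norm ((1 / real N) *\<^sub>R (\<Sum>i\<in>{1..N}. hg (xis i om)) - m))\<^sup>2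
        = (norm ((1 / real N) *\<^sub>R (\<Sum>i\<in>{1..N}. Y i om)))\<^sup>2" by simp
    also have "\<dots> = (1 / real N)\<^sup>2 * (norm (\<Sum>i\<in>{1..N}. Y i om))\<^sup>2"
      by (simp add: power_divide)
    also have "\<dots> = (1 / real N)\<^sup>2 * inner (\<Sum>i\<in>{1..N}. Y i om) (\<Sum>j\<in>{1..N}. Y j om)"
      by (simp only: power2_norm_eq_inner)
    also have "\<dots> = (1 / real N)\<^sup>2 * (\<Sum>i\<in>{1..N}. \<Sum>j\<in>{1..N}. inner (Y i om) (Y j om))"
      unfolding inner_sum_left by (simp only: inner_sum_right)
    finally show ?thesis .
  qed
  have rowint: "integrable P (\<lambda>om. \<Sum>j\<in>{1..N}. inner (Y i om) (Y j om))" if i: "i \<in> {1..N}" for i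
  proof (rule Bochner_Integration.integrable_sum)
    fix j assume "j \<in> {1..N}"
    then show "integrable P (\<lambda>om. inner (Y i om) (Y j om))" using YYint i by auto
  qed
  have allint: "integrable P (\<lambda>om. \<Sum>i\<in>{1..N}. \<Sum>j\<in>{1..N}. inner (Y i om) (Y j om))"
    by (rule Bochner_Integration.integrable_sum) (rule rowint)
  have sumint: "integrable P (\<lambda>om. (1 / real N)\<^sup>2 * (\<Sum>i\<in>{1..N}. \<Sum>j\<in>{1..N}. inner (Y i om) (Y j om)))"
    using allint by (rule integrable_mult_right)
  then show "integrable P (\<lambda>om. (norm ((1 / real N) *\<^sub>R (\<Sum>i\<in>{1..N}. hg (xis i om)) - m))\<^sup>2)"
    unfolding eq .
  have inner_sum: "(\<Sum>j\<in>{1..N}. \<integral>om. inner (Y i om) (Y j om) \<partial>P) = s2" if i: "i \<in> {1..N}" for i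
  proof -
    have "(\<Sum>j\<in>{1..N}. \<integral>om. inner (Y i om) (Y j om) \<partial>P) = (\<Sum>j\<in>{1..N}. if j = i then s2 else 0)"
    proof (rule sum.cong[OF refl])
      fix j assume j: "j \<in> {1..N}"
      show "(\<integral>om. inner (Y i om) (Y j om) \<partial>P) = (if j = i then s2 else 0)"
      proof (cases "j = i")
        case True
        then show ?thesis using Ysq[of i] i by (simp add: power2_norm_eq_inner)
      next
        case False
        then show ?thesis using YY0[of i j] i j by simp
      qed
    qed
    also have "\<dots> = s2" using i by (simp add: sum.delta')
    finally show ?thesis .
  qed
  have "(\<integral>om. (norm ((1 / real N) *\<^sub>R (\<Sum>i\<in>{1..N}. hg (xis i om)) - m))\<^sup>2 \<partial>P)
      = (1 / real N)\<^sup>2 * (\<Sum>i\<in>{1..N}. \<Sum>j\<in>{1..N}. \<integral>om. inner (Y i om) (Y j om) \<partial>P)"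
  proof -
    have "(\<integral>om. (1 / real N)\<^sup>2 * (\<Sum>i\<in>{1..N}. \<Sum>j\<in>{1..N}. inner (Y i om) (Y j om)) \<partial>P)
        = (1 / real N)\<^sup>2 * (\<integral>om. (\<Sum>i\<in>{1..N}. \<Sum>j\<in>{1..N}. inner (Y i om) (Y j om)) \<partial>P)"
      by (rule integral_mult_right_zero)
    also have "(\<integral>om. (\<Sum>i\<in>{1..N}. \<Sum>j\<in>{1..N}. inner (Y i om) (Y j om)) \<partial>P)
        = (\<Sum>i\<in>{1..N}. \<integral>om. (\<Sum>j\<in>{1..N}. inner (Y i om) (Y j om)) \<partial>P)"
      by (rule Bochner_Integration.integral_sum) (rule rowint)
    also have "\<dots> = (\<Sum>i\<in>{1..N}. \<Sum>j\<in>{1..N}. \<integral>om. inner (Y i om) (Y j om) \<partial>P)"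
    proof (rule sum.cong[OF refl])
      fix i assume i: "i \<in> {1..N}"
      show "(\<integral>om. (\<Sum>j\<in>{1..N}. inner (Y i om) (Y j om)) \<partial>P) = (\<Sum>j\<in>{1..N}. \<integral>om. inner (Y i om) (Y j om) \<partial>P)"
        by (rule Bochner_Integration.integral_sum) (use YYint i in auto)
    qed
    finally show ?thesis unfolding eq .
  qed
  also have "\<dots> = (1 / real N)\<^sup>2 * (real N * s2)" using inner_sum by simp
  also have "\<dots> = s2 / real N" using Npos by (simp add: power2_eq_square field_simps)
  finally show "(\<integral>om. (norm ((1 / real N) *\<^sub>R (\<Sum>i\<in>{1..N}. hg (xis i om)) - m))\<^sup>2 \<partial>P) = s2 / real N" .
qed




lemma const_ineq:
  fixes th L :: real assumes th: "th > 0" and L: "L > 0"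
  shows "1/th + L/th\<^sup>2 + L\<^sup>2/(4*th^3) \<le> 1 + (1/th + L/th\<^sup>2)\<^sup>2 + 4*L\<^sup>2/th\<^sup>2"
proof -
  define a where "a = 1/th"
  define x where "x = L/th\<^sup>2"
  have a: "a > 0" using th by (simp add: a_def)
  have x: "x > 0" using th L by (simp add: x_def)
  have e1: "L\<^sup>2/(4*th^3) = x\<^sup>2/(4*a)" using th by (simp add: a_def x_def power2_eq_square power3_eq_cube field_simps)
  have e2: "4*L\<^sup>2/th\<^sup>2 = 4*x\<^sup>2/a\<^sup>2" using th by (simp add: a_def x_def power2_eq_square field_simps)
  have goal: "a + x + x\<^sup>2/(4*a) \<le> 1 + (a + x)\<^sup>2 + 4*x\<^sup>2/a\<^sup>2"
  proof (cases "a \<ge> 1/2")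
    case True
    have "x \<le> 2*a*x" using True x by (simp add: mult_right_mono[of 1 "2*a" x, simplified])
    moreover have "x\<^sup>2/(4*a) \<le> x\<^sup>2"
    proof -
      have "x\<^sup>2/(4*a) \<le> x\<^sup>2/1" by (rule divide_left_mono) (use True in auto)
      then show ?thesis by simp
    qed
    moreover have "a \<le> 1 + a\<^sup>2"
    proof -
      have "0 \<le> (a - 1)\<^sup>2" by simp
      then have "2 * a \<le> a\<^sup>2 + 1" unfolding power2_diff by simp
      moreover have "0 \<le> a\<^sup>2" by simp
      ultimately show ?thesis by linarith
    qed
    moreover have "0 \<le> 4*x\<^sup>2/a\<^sup>2" by simp
    ultimately show ?thesis unfolding power2_sum by linarith
  next
    case False
    have "x\<^sup>2/(4*a) \<le> 4*x\<^sup>2/a\<^sup>2"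
    proof -
      have "x\<^sup>2/(4*a) = (a * x\<^sup>2) / (4*a\<^sup>2)" using a by (simp add: power2_eq_square field_simps)
      also have "\<dots> \<le> (16 * x\<^sup>2) / (4*a\<^sup>2)" using False a by (intro divide_right_mono mult_right_mono) auto
      also have "\<dots> = 4*x\<^sup>2/a\<^sup>2" by simp
      finally show ?thesis .
    qed
    moreover have "x \<le> 1/4 + x\<^sup>2"
    proof -
      have "0 \<le> (x - 1/2)\<^sup>2" by simp
      then show ?thesis unfolding power2_diff by (simp add: power2_eq_square)
    qed
    moreover have "0 \<le> a\<^sup>2 + 2*a*x" using a x by simp
    ultimately show ?thesis using False unfolding power2_sum by linarith
  qed
  then show ?thesis unfolding e1 e2 a_def[symmetric] x_def[symmetric] by simp
qed



lemma key_alg: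
  fixes a b gh gs u us v :: "'u::real_inner" and iU :: "'u \<Rightarrow> 'UU::real_normed_vector" and p :: "'u \<Rightarrow> real"
  assumes iU: "bounded_linear iU" and th: "th > 0" and L: "L > 0" and cE: "cE \<ge> 0"
    and uS: "u \<in> S" and vS: "v \<in> S"
    and growth: "\<And>v. v \<in> S \<Longrightarrow> th * (norm (iU (v - us)))\<^sup>2 \<le> inner a (v - us) + p v - p us"
    and VI: "0 \<le> inner gh (us - u) + p us - p u"
    and mono: "0 \<le> inner (gh - gs) (u - us)"
    and e: "\<And>w. \<bar>inner (gs - a) w\<bar> \<le> cE * norm (iU w)"
    and lip: "\<And>w. \<bar>inner (b - a) w\<bar> \<le> L * norm (iU (u - us)) * norm (iU w)"
  shows "inner b (u - v) + p u - p v \<le> (1 + (1/th + L/th\<^sup>2)\<^sup>2 + 4*L\<^sup>2/th\<^sup>2) * cE\<^sup>2"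
proof -
  interpret iU: bounded_linear iU by fact
  define d where "d = norm (iU (u - us))"
  define Dv where "Dv = norm (iU (v - us))"
  define A where "A = inner a (u - us) + p u - p us"
  have d0: "d \<ge> 0" "Dv \<ge> 0" by (simp_all add: d_def Dv_def)
  have hA1: "th * d\<^sup>2 \<le> A" using growth[OF uS] by (simp add: d_def A_def)
  have "A \<le> inner a (u - us) + inner gh (us - u)" using VI by (simp add: A_def)
  also have "\<dots> = inner (a - gs) (u - us) - inner (gh - gs) (u - us)"
    by (simp add: inner_diff_left inner_diff_right algebra_simps)
  also have "\<dots> \<le> \<bar>inner (gs - a) (u - us)\<bar>" using mono
    by (simp add: inner_diff_left) 
  also have "\<dots> \<le> cE * d" using e by (simp add: d_def)
  finally have hA2: "A \<le> cE * d" .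
  have hd: "th * d \<le> cE"
  proof (cases "d = 0")
    case True then show ?thesis using cE by simp
  next
    case False
    then have "d > 0" using d0 by simp
    moreover have "(th * d) * d \<le> cE * d" using hA1 hA2 by (simp add: power2_eq_square mult.assoc)
    ultimately show ?thesis by simp
  qed
  have dle: "d \<le> cE / th" using hd th by (simp add: field_simps)
  have h2: "inner a (us - v) + p us - p v \<le> - th * Dv\<^sup>2"
    using growth[OF vS] by (simp add: Dv_def inner_diff_right)
  have nuv: "norm (iU (u - v)) \<le> d + Dv"
  proof -
    have "iU (u - v) = iU (u - us) - iU (v - us)" by (simp add: iU.diff[symmetric])
    then show ?thesis unfolding d_def Dv_def by (metis norm_triangle_ineq4)
  qed
  have h3: "inner (b - a) (u - v) \<le> L * d * (d + Dv)"
  proof -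
    have "inner (b - a) (u - v) \<le> L * d * norm (iU (u - v))" using lip[of "u - v"] by (simp add: d_def)
    also have "\<dots> \<le> L * d * (d + Dv)" using nuv L d0 by (intro mult_left_mono) auto
    finally show ?thesis .
  qed
  have split: "inner b (u - v) + p u - p v = A + (inner a (us - v) + p us - p v) + inner (b - a) (u - v)"
    by (simp add: A_def inner_diff_left inner_diff_right algebra_simps)
  have sq: "L * d * Dv - th * Dv\<^sup>2 \<le> L\<^sup>2 * d\<^sup>2 / (4 * th)"
  proof -
    have "0 \<le> th * (Dv - L * d / (2 * th))\<^sup>2" using th by simp
    also have "th * (Dv - L * d / (2 * th))\<^sup>2 = th * Dv\<^sup>2 - L * d * Dv + L\<^sup>2 * d\<^sup>2 / (4 * th)"
      using th by (simp add: power2_eq_square field_simps)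
    finally show ?thesis by simp
  qed
  have "inner b (u - v) + p u - p v \<le> cE * d + L * d\<^sup>2 + L\<^sup>2 * d\<^sup>2 / (4 * th)"
    using split hA2 h2 h3 sq by (simp add: power2_eq_square algebra_simps)
  also have "\<dots> \<le> cE * (cE / th) + L * (cE / th)\<^sup>2 + L\<^sup>2 * (cE / th)\<^sup>2 / (4 * th)"
  proof -
    have dsq: "d\<^sup>2 \<le> (cE / th)\<^sup>2" using dle d0 by (intro power_mono) auto
    have "cE * d \<le> cE * (cE / th)" using dle cE by (intro mult_left_mono)
    moreover have "L * d\<^sup>2 \<le> L * (cE / th)\<^sup>2" using dsq L by simp
    moreover have "L\<^sup>2 * d\<^sup>2 / (4 * th) \<le> L\<^sup>2 * (cE / th)\<^sup>2 / (4 * th)"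
      using dsq th by (intro divide_right_mono mult_left_mono) auto
    ultimately show ?thesis by linarith
  qed
  also have "\<dots> = (1/th + L/th\<^sup>2 + L\<^sup>2/(4*th^3)) * cE\<^sup>2"
    using th by (simp add: power2_eq_square power3_eq_cube field_simps)
  also have "\<dots> \<le> (1 + (1/th + L/th\<^sup>2)\<^sup>2 + 4*L\<^sup>2/th\<^sup>2) * cE\<^sup>2"
    using const_ineq[OF th L] by (intro mult_right_mono) auto
  finally show ?thesis .
qed


theorem corollary3p12:
  fixes P :: "'om measure"
    and xi :: "'om \<Rightarrow> 'x::polish_space"
    and xis :: "nat \<Rightarrow> 'om \<Rightarrow> 'x"
    and B :: "'u::{real_inner, polish_space} \<Rightarrow> 'w::{banach, second_countable_topology}"
    and psi :: "'u \<Rightarrow> ereal"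
    and U0 :: "'u set"
    and f :: "'w \<Rightarrow> 'x \<Rightarrow> real"
    and zf :: "'x \<Rightarrow> real"
    and Dg :: "'x \<Rightarrow> 'u \<Rightarrow> 'u"
    and Dwf :: "'w \<Rightarrow> 'x \<Rightarrow> ('w \<Rightarrow>\<^sub>L real)"
    and zD :: "'x \<Rightarrow> real"
    and ustar :: "'u"
    and uN :: "nat \<Rightarrow> 'om \<Rightarrow> 'u"
    and iU :: "'u \<Rightarrow> 'UU::banach"
    and jV :: "('UU \<Rightarrow>\<^sub>L real) \<Rightarrow> 'u"
    and kH :: "'h::{real_inner, polish_space} \<Rightarrow> ('UU \<Rightarrow>\<^sub>L real)"
    and CH :: real
    and theta :: real
    and hg :: "'x \<Rightarrow> 'h"
    and sigma :: real
    and L :: real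
  assumes \<comment> \<open>probability setting: complete probability space, xi^1, xi^2, ... iid copies of xi\<close>
    prob: "prob_space P" and complete: "complete_measure P"
    and xi_meas: "xi \<in> measurable P borel"
    and xis_meas: "\<And>i. i \<ge> 1 \<Longrightarrow> xis i \<in> measurable P borel"
    and xis_indep: "prob_space.indep_vars P (\<lambda>_. borel) xis {1..}"
    and xis_distr: "\<And>i. i \<ge> 1 \<Longrightarrow> distr P borel (xis i) = distr P borel xi"
    \<comment> \<open>B compact linear; psi proper closed convex, values in [0,\<infinity>], bounded domain\<close>
    and B_compact: "compact_operator B"
    and psi_pcc: "proper_closed_convex psi"
    and psi_nonneg: "\<And>u. psi u \<ge> 0"
    and dom_bounded: "bounded (edom psi)"
    and U0: "open U0" "convex U0" "bounded U0" "edom psi \<subseteq> U0"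
    \<comment> \<open>integrand f\<close>
    and f_cont: "\<And>x. continuous_on (B ` edom psi) (\<lambda>w. f w x)"
    and f_meas: "\<And>w. w \<in> B ` U0 \<Longrightarrow> (\<lambda>x. f w x) \<in> borel_measurable borel"
    and f_bound: "\<And>u x. u \<in> U0 \<Longrightarrow> \<bar>f (B u) x\<bar> \<le> zf x"
    and zf_int: "integrable (distr P borel xi) zf"
    and g_diff: "\<And>x u. u \<in> U0 \<Longrightarrow> ((\<lambda>v. f (B v) x) has_derivative (\<lambda>h. inner (Dg x u) h)) (at u)"
    and g_C1: "\<And>x. continuous_on U0 (Dg x)"
    and Dwf_cont: "\<And>x. continuous_on (B ` edom psi) (\<lambda>w. Dwf w x)"
    and Dwf_meas: "\<And>w. w \<in> B ` edom psi \<Longrightarrow> (\<lambda>x. Dwf w x) \<in> borel_measurable borel"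
    and Dg_Dwf: "\<And>x u. u \<in> edom psi \<Longrightarrow> Dg x u = adj B (Dwf (B u) x)"
    and Dg_bound: "\<And>x u. u \<in> U0 \<Longrightarrow> norm (Dg x u) \<le> zD x"
    and Dwf_bound: "\<And>x u. u \<in> edom psi \<Longrightarrow> norm (Dwf (B u) x) \<le> zD x"
    and zD_int: "integrable (distr P borel xi) zD"
    \<comment> \<open>u* solves min G, u_N* measurable solutions of the SAA problems\<close>
    and ustar_opt: "\<And>u. Gobj P xi f B psi ustar \<le> Gobj P xi f B psi u"
    and uN_meas: "\<And>N. N \<ge> 1 \<Longrightarrow> uN N \<in> measurable P borel"
    and uN_opt: "\<And>N om u. N \<ge> 1 \<Longrightarrow>
        ereal (Fhat N xis f (B (uN N om)) om) + psi (uN N om) \<le> ereal (Fhat N xis f (B u) om) + psi u"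
    \<comment> \<open>spaces \<U>* \<hookrightarrow> U \<hookrightarrow> \<U>, \<H> \<hookrightarrow> \<U>* (continuous linear injective embeddings)\<close>
    and iU_emb: "bounded_linear iU" "inj iU"
    and jV_emb: "bounded_linear jV" "inj jV"
    and kH_emb: "bounded_linear kH" "inj kH"
    and kH_const: "\<And>h. norm (kH h) \<le> CH * norm h"
    and pairing: "\<And>v u. \<bar>inner (jV v) u\<bar> \<le> norm v * norm (iU u)"
    \<comment> \<open>quadratic growth condition\<close>
    and theta_pos: "theta > 0"
    and growth: "\<And>u. ereal (inner (adj B (DFexp P xi Dwf (B ustar))) (u - ustar)) + psi u - psi ustar
                   \<ge> ereal (theta * (norm (iU (u - ustar)))\<^sup>2)"
    \<comment> \<open>gradient at u* is \<H>-valued, integrable, with finite variance sigma^2\<close>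
    and hg_repr: "\<And>x. jV (kH (hg x)) = Dg x ustar"
    and hg_int: "integrable (distr P borel xi) hg"
    and hg_var: "integrable P (\<lambda>om. (norm (hg (xi om) - (\<integral>om'. hg (xi om') \<partial>P)))\<^sup>2)"
    and sigma_def: "sigma = sqrt (\<integral>om. (norm (hg (xi om) - (\<integral>om'. hg (xi om') \<partial>P)))\<^sup>2 \<partial>P)"
    \<comment> \<open>hypotheses of the corollary: convexity of f(.,xi) and \<U>-Lipschitz gradients\<close>
    and f_convex: "\<And>x. convex_on (B ` U0) (\<lambda>w. f w x)"
    and L_pos: "L > 0"
    and grad_lip: "\<And>x u1 u2. u1 \<in> edom psi \<Longrightarrow> u2 \<in> edom psi \<Longrightarrow>
        \<exists>v. jV v = Dg x u2 - Dg x u1 \<and> norm v \<le> L * norm (iU (u2 - u1))"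
  shows "\<forall>N\<ge>1.
     (\<integral>\<^sup>+om. e2ennreal (Gobj P xi f B psi (uN N om) - Gobj P xi f B psi ustar) \<partial>P)
       \<le> (\<integral>\<^sup>+om. e2ennreal (Psi_crit P xi Dwf B psi (uN N om)) \<partial>P)
   \<and> (\<integral>\<^sup>+om. e2ennreal (Psi_crit P xi Dwf B psi (uN N om)) \<partial>P)
       \<le> ennreal ((1 + (1 / theta + L / theta\<^sup>2)\<^sup>2 + 4 * L\<^sup>2 / theta\<^sup>2) * CH\<^sup>2 * sigma\<^sup>2 / real N)"
proof -
  interpret prob_space P by (rule prob)
  have Blin: "bounded_linear B" using B_compact by (simp add: compact_operator_def)
  interpret B: bounded_linear B by (rule Blin)
  interpret iU: bounded_linear iU by (rule iU_emb(1))
  interpret jV: bounded_linear jV by (rule jV_emb(1))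
  interpret kH: bounded_linear kH by (rule kH_emb(1))
  note adjB = adj_prop[OF Blin]
  note xi_meas[measurable]
  define p where "p u = real_of_ereal (psi u)" for u
  have psi_p: "psi u = ereal (p u)" if "u \<in> edom psi" for u
    using that psi_nonneg[of u] by (cases "psi u") (auto simp: p_def edom_def)
  obtain u0 where u0: "u0 \<in> edom psi" using psi_pcc by (auto simp: proper_closed_convex_def edom_def)
  have edomU0: "u \<in> U0" if "u \<in> edom psi" for u using U0(4) that by auto
  have ustar_dom: "ustar \<in> edom psi"
  proof -
    have "Gobj P xi f B psi ustar \<le> Gobj P xi f B psi u0" by (rule ustar_opt)
    also have "\<dots> < \<infinity>" using psi_p[OF u0] by (simp add: Gobj_def)
    finally show ?thesis by (cases "psi ustar") (auto simp: Gobj_def edom_def)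
  qed
  have uN_dom: "uN N om \<in> edom psi" if "N \<ge> 1" for N om
  proof -
    have "ereal (Fhat N xis f (B (uN N om)) om) + psi (uN N om) \<le> ereal (Fhat N xis f (B u0) om) + psi u0"
      by (rule uN_opt[OF that])
    also have "\<dots> < \<infinity>" using psi_p[OF u0] by simp
    finally show ?thesis by (cases "psi (uN N om)") (auto simp: edom_def)
  qed
  have psi_conv: "(1 - t) *\<^sub>R u + t *\<^sub>R v \<in> edom psi \<and> p ((1 - t) *\<^sub>R u + t *\<^sub>R v) \<le> (1 - t) * p u + t * p v"
    if uv: "u \<in> edom psi" "v \<in> edom psi" and t: "0 \<le> t" "t \<le> 1" for u v t
  proof -
    have cv: "convex {(u, c::real). psi u \<le> ereal c}" using psi_pcc by (simp add: proper_closed_convex_def)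
    have "(u, p u) \<in> {(u, c::real). psi u \<le> ereal c}" "(v, p v) \<in> {(u, c::real). psi u \<le> ereal c}"
      using psi_p uv by auto
    then have "(1 - t) *\<^sub>R (u, p u) + t *\<^sub>R (v, p v) \<in> {(u, c::real). psi u \<le> ereal c}"
      using t by (intro convexD[OF cv]) auto
    then have le: "psi ((1 - t) *\<^sub>R u + t *\<^sub>R v) \<le> ereal ((1 - t) * p u + t * p v)" by simp
    then have dom: "(1 - t) *\<^sub>R u + t *\<^sub>R v \<in> edom psi" by (auto simp: edom_def le_less_trans)
    with le psi_p[OF dom] show ?thesis by auto
  qed
  have zD_meas[measurable]: "zD \<in> borel_measurable borel"
  proof -
    have "zD \<in> borel_measurable (distr P borel xi)" by (rule borel_measurable_integrable[OF zD_int])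
    moreover have "borel_measurable (distr P borel xi) = (borel_measurable borel :: ('x \<Rightarrow> _) set)"
      by (rule measurable_cong_sets) auto
    ultimately show ?thesis by simp
  qed
  have zf_meas[measurable]: "zf \<in> borel_measurable borel"
  proof -
    have "zf \<in> borel_measurable (distr P borel xi)" by (rule borel_measurable_integrable[OF zf_int])
    moreover have "borel_measurable (distr P borel xi) = (borel_measurable borel :: ('x \<Rightarrow> _) set)"
      by (rule measurable_cong_sets) auto
    ultimately show ?thesis by simp
  qed
  have zD_P: "integrable P (\<lambda>om. zD (xi om))" using zD_int by (subst (asm) integrable_distr_eq) auto
  have zf_P: "integrable P (\<lambda>om. zf (xi om))" using zf_int by (subst (asm) integrable_distr_eq) auto
  have f_int: "integrable P (\<lambda>om. f (B u) (xi om))" if u: "u \<in> U0" for u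
  proof (rule Bochner_Integration.integrable_bound[OF zf_P])
    have "(\<lambda>x. f (B u) x) \<in> borel_measurable borel" using f_meas u by auto
    from measurable_compose[OF xi_meas this]
    show "(\<lambda>om. f (B u) (xi om)) \<in> borel_measurable P" .
    show "AE om in P. norm (f (B u) (xi om)) \<le> norm (zf (xi om))"
      using f_bound[OF u] by (auto intro: order_trans[OF _ abs_ge_self])
  qed
  have Dwf_int: "integrable P (\<lambda>om. blinfun_apply (Dwf (B u) (xi om)) y)" if u: "u \<in> edom psi" for u y
  proof (rule Bochner_Integration.integrable_bound)
    show "integrable P (\<lambda>om. zD (xi om) * norm y)" using zD_P by auto
    have "(\<lambda>x. Dwf (B u) x) \<in> borel_measurable borel" using Dwf_meas u by auto
    from measurable_compose[OF xi_meas this]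
    have m1: "(\<lambda>om. Dwf (B u) (xi om)) \<in> borel_measurable P" .
    have "(\<lambda>a. blinfun_apply a y) \<in> borel_measurable borel"
      by (intro borel_measurable_continuous_onI linear_continuous_on blinfun.bounded_linear_left)
    from measurable_compose[OF m1 this]
    show "(\<lambda>om. blinfun_apply (Dwf (B u) (xi om)) y) \<in> borel_measurable P" .
    show "AE om in P. norm (blinfun_apply (Dwf (B u) (xi om)) y) \<le> norm (zD (xi om) * norm y)"
    proof (intro AE_I2)
      fix om
      have "norm (blinfun_apply (Dwf (B u) (xi om)) y) \<le> norm (Dwf (B u) (xi om)) * norm y" by (rule norm_blinfun)
      also have "\<dots> \<le> zD (xi om) * norm y" using Dwf_bound[OF u] by (intro mult_right_mono) auto
      also have "\<dots> \<le> norm (zD (xi om) * norm y)" by simp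
      finally show "norm (blinfun_apply (Dwf (B u) (xi om)) y) \<le> norm (zD (xi om) * norm y)" .
    qed
  qed
  have DF_apply: "blinfun_apply (DFexp P xi Dwf (B u)) y = (\<integral>om. blinfun_apply (Dwf (B u) (xi om)) y \<partial>P)"
    if u: "u \<in> edom psi" for u y
  proof -
    have bl: "bounded_linear (\<lambda>y. \<integral>om. blinfun_apply (Dwf (B u) (xi om)) y \<partial>P)"
    proof (rule bounded_linear_intro[where K="\<integral>om. zD (xi om) \<partial>P"])
      fix x y
      show "(\<integral>om. blinfun_apply (Dwf (B u) (xi om)) (x + y) \<partial>P) =
          (\<integral>om. blinfun_apply (Dwf (B u) (xi om)) x \<partial>P) + (\<integral>om. blinfun_apply (Dwf (B u) (xi om)) y \<partial>P)"
        using Dwf_int[OF u] by (simp add: blinfun.add_right)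
    next
      fix r x
      show "(\<integral>om. blinfun_apply (Dwf (B u) (xi om)) (r *\<^sub>R x) \<partial>P) = r *\<^sub>R (\<integral>om. blinfun_apply (Dwf (B u) (xi om)) x \<partial>P)"
        by (simp add: blinfun.scaleR_right)
    next
      fix x
      have "norm (\<integral>om. blinfun_apply (Dwf (B u) (xi om)) x \<partial>P) \<le> (\<integral>om. norm (blinfun_apply (Dwf (B u) (xi om)) x) \<partial>P)"
        by (rule integral_norm_bound)
      also have "\<dots> \<le> (\<integral>om. zD (xi om) * norm x \<partial>P)"
      proof (rule integral_mono)
        show "integrable P (\<lambda>om. norm (blinfun_apply (Dwf (B u) (xi om)) x))" using Dwf_int[OF u] by auto
        show "integrable P (\<lambda>om. zD (xi om) * norm x)" using zD_P by auto
        fix om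
        have "norm (blinfun_apply (Dwf (B u) (xi om)) x) \<le> norm (Dwf (B u) (xi om)) * norm x" by (rule norm_blinfun)
        also have "\<dots> \<le> zD (xi om) * norm x" using Dwf_bound[OF u] by (intro mult_right_mono) auto
        finally show "norm (blinfun_apply (Dwf (B u) (xi om)) x) \<le> zD (xi om) * norm x" .
      qed
      also have "\<dots> = norm x * (\<integral>om. zD (xi om) \<partial>P)" by (simp add: mult.commute)
      finally show "norm (\<integral>om. blinfun_apply (Dwf (B u) (xi om)) x \<partial>P) \<le> norm x * (\<integral>om. zD (xi om) \<partial>P)" .
    qed
    show ?thesis by (simp add: DFexp_def bounded_linear_Blinfun_apply[OF bl])
  qed
  define gF where "gF u = adj B (DFexp P xi Dwf (B u))" for u
  have Dg_inner: "inner (Dg x u) w = blinfun_apply (Dwf (B u) x) (B w)" if "u \<in> edom psi" for x u w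
    using Dg_Dwf[OF that] adjB by simp
  have Dg_int: "integrable P (\<lambda>om. inner (Dg (xi om) u) w)" if "u \<in> edom psi" for u w
    using Dwf_int[OF that, of "B w"] Dg_inner[OF that] by simp
  have gF_inner: "inner (gF u) w = (\<integral>om. inner (Dg (xi om) u) w \<partial>P)" if "u \<in> edom psi" for u w
    unfolding gF_def adjB DF_apply[OF that] Dg_inner[OF that] ..
  have g_conv: "convex_on U0 (\<lambda>v. f (B v) x)" for x
  proof (rule convex_onI)
    show "convex U0" by (rule U0(2))
    fix t :: real and y z assume t: "0 < t" "t < 1" and yz: "y \<in> U0" "z \<in> U0"
    have "f (B ((1 - t) *\<^sub>R y + t *\<^sub>R z)) x = f ((1 - t) *\<^sub>R B y + t *\<^sub>R B z) x" by (simp add: B.add B.scaleR)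
    also have "\<dots> \<le> (1 - t) * f (B y) x + t * f (B z) x"
      using t yz by (intro convex_onD[OF f_convex]) auto
    finally show "f (B ((1 - t) *\<^sub>R y + t *\<^sub>R z)) x \<le> (1 - t) * f (B y) x + t * f (B z) x" .
  qed
  have g_tan: "f (B u) x + inner (Dg x u) (w - u) \<le> f (B w) x" if "u \<in> U0" "w \<in> U0" for u w x
    using convex_tangent[OF g_conv U0(2) that g_diff[OF that(1)]] by simp
  have F_tan: "Fexp P xi f (B u) + inner (gF u) (w - u) \<le> Fexp P xi f (B w)"
    if u: "u \<in> edom psi" and w: "w \<in> U0" for u w
  proof -
    have "Fexp P xi f (B u) + inner (gF u) (w - u) = (\<integral>om. f (B u) (xi om) + inner (Dg (xi om) u) (w - u) \<partial>P)"
      using f_int[OF edomU0[OF u]] Dg_int[OF u] by (simp add: Fexp_def gF_inner[OF u])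
    also have "\<dots> \<le> Fexp P xi f (B w)" unfolding Fexp_def
      using f_int[OF edomU0[OF u]] Dg_int[OF u] f_int[OF w] g_tan[OF edomU0[OF u] w]
      by (intro integral_mono) auto
    finally show ?thesis .
  qed
  have hg_meas[measurable]: "hg \<in> borel_measurable borel"
  proof -
    have "hg \<in> borel_measurable (distr P borel xi)" by (rule borel_measurable_integrable[OF hg_int])
    moreover have "borel_measurable (distr P borel xi) = (borel_measurable borel :: ('x \<Rightarrow> _) set)"
      by (rule measurable_cong_sets) auto
    ultimately show ?thesis by simp
  qed
  have hgP: "integrable P (\<lambda>om. hg (xi om))" by (rule integrable_distr_gen(1)[OF xi_meas hg_int])
  define m where "m = (\<integral>om. hg (xi om) \<partial>P)"
  have a_eq: "gF ustar = jV (kH m)"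
  proof -
    have eq: "inner (gF ustar) w = inner (jV (kH m)) w" for w
    proof -
      have bl: "bounded_linear (\<lambda>h. inner (jV (kH h)) w)"
        by (intro bounded_linear_compose[OF bounded_linear_inner_left] bounded_linear_compose[OF jV_emb(1)] kH_emb(1))
      have "inner (gF ustar) w = (\<integral>om. inner (jV (kH (hg (xi om)))) w \<partial>P)"
        using gF_inner[OF ustar_dom] hg_repr by simp
      also have "\<dots> = inner (jV (kH m)) w" unfolding m_def
        by (rule integral_bounded_linear[OF bl hgP])
      finally show ?thesis .
    qed
    have "inner (gF ustar - jV (kH m)) (gF ustar - jV (kH m)) = 0"
      using eq by (simp add: inner_diff_left)
    then show ?thesis by simp
  qed
  have lipF: "\<bar>inner (gF u - gF ustar) w\<bar> \<le> L * norm (iU (u - ustar)) * norm (iU w)"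
    if u: "u \<in> edom psi" for u w
  proof -
    have pt: "\<bar>inner (Dg x u - Dg x ustar) w\<bar> \<le> L * norm (iU (u - ustar)) * norm (iU w)" for x
    proof -
      obtain v where v: "jV v = Dg x u - Dg x ustar" "norm v \<le> L * norm (iU (u - ustar))"
        using grad_lip[OF ustar_dom u] by blast
      have "\<bar>inner (jV v) w\<bar> \<le> norm v * norm (iU w)" by (rule pairing)
      also have "\<dots> \<le> L * norm (iU (u - ustar)) * norm (iU w)" using v(2) by (intro mult_right_mono) auto
      finally show ?thesis using v(1) by simp
    qed
    have "inner (gF u - gF ustar) w = (\<integral>om. inner (Dg (xi om) u - Dg (xi om) ustar) w \<partial>P)"
      using Dg_int[OF u] Dg_int[OF ustar_dom]
      by (simp add: inner_diff_left gF_inner[OF u] gF_inner[OF ustar_dom])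
    also have "\<bar>\<dots>\<bar> \<le> (\<integral>om. \<bar>inner (Dg (xi om) u - Dg (xi om) ustar) w\<bar> \<partial>P)"
      by (rule integral_abs_bound)
    also have "\<dots> \<le> (\<integral>om. L * norm (iU (u - ustar)) * norm (iU w) \<partial>P)"
      using Dg_int[OF u] Dg_int[OF ustar_dom] pt
      by (intro integral_mono) (auto simp: inner_diff_left)
    also have "\<dots> = L * norm (iU (u - ustar)) * norm (iU w)" by (simp add: prob_space)
    finally show ?thesis .
  qed
  have growth_r: "theta * (norm (iU (v - ustar)))\<^sup>2 \<le> inner (gF ustar) (v - ustar) + p v - p ustar"
    if v: "v \<in> edom psi" for v
    using growth[of v] psi_p[OF v] psi_p[OF ustar_dom] by (simp add: gF_def)
  define K where "K = (1 + (1 / theta + L / theta\<^sup>2)\<^sup>2 + 4 * L\<^sup>2 / theta\<^sup>2)"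
  have K0: "K \<ge> 0" unfolding K_def using theta_pos by (intro add_nonneg_nonneg) auto
  define hbar where "hbar N om = (1 / real N) *\<^sub>R (\<Sum>i\<in>{1..N}. hg (xis i om))" for N om
  have pointwise: "Gobj P xi f B psi (uN N om) - Gobj P xi f B psi ustar \<le> Psi_crit P xi Dwf B psi (uN N om)
      \<and> Psi_crit P xi Dwf B psi (uN N om) \<le> ereal (K * CH\<^sup>2 * (norm (hbar N om - m))\<^sup>2)"
    if N: "N \<ge> 1" for N om
  proof -
    define u where "u = uN N om"
    have udom: "u \<in> edom psi" using uN_dom[OF N] by (simp add: u_def)
    have uU0: "u \<in> U0" by (rule edomU0[OF udom])
    have usU0: "ustar \<in> U0" by (rule edomU0[OF ustar_dom])
    define gN where "gN v = (1 / real N) *\<^sub>R (\<Sum>i\<in>{1..N}. Dg (xis i om) v)" for v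
    have Fhat_d: "((\<lambda>v. Fhat N xis f (B v) om) has_derivative (\<lambda>h. inner (gN z) h)) (at z)"
      if z: "z \<in> U0" for z
    proof -
      have "((\<lambda>v. (1 / real N) * (\<Sum>i\<in>{1..N}. f (B v) (xis i om))) has_derivative
              (\<lambda>h. (1 / real N) * (\<Sum>i\<in>{1..N}. inner (Dg (xis i om) z) h))) (at z)"
        by (intro has_derivative_mult_right has_derivative_sum g_diff[OF z])
      moreover have "(\<lambda>h. (1 / real N) * (\<Sum>i\<in>{1..N}. inner (Dg (xis i om) z) h)) = (\<lambda>h. inner (gN z) h)"
        by (simp add: gN_def inner_sum_left fun_eq_iff)
      ultimately show ?thesis by (simp add: Fhat_def)
    qed
    have VI: "0 \<le> inner (gN u) (ustar - u) + p ustar - p u"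
    proof -
      have "- (p ustar - p u) \<le> inner (gN u) (ustar - u)"
      proof (rule deriv_right_bounds(1)[OF line_derivative[OF Fhat_d[OF uU0]]])
        fix t :: real assume t: "0 < t" "t \<le> 1"
        have eqt: "u + t *\<^sub>R (ustar - u) = (1 - t) *\<^sub>R u + t *\<^sub>R ustar" by (simp add: algebra_simps)
        from psi_conv[OF udom ustar_dom, of t] t
        have ut: "u + t *\<^sub>R (ustar - u) \<in> edom psi" "p (u + t *\<^sub>R (ustar - u)) \<le> (1 - t) * p u + t * p ustar"
          by (auto simp: eqt)
        have "ereal (Fhat N xis f (B u) om) + psi u \<le> ereal (Fhat N xis f (B (u + t *\<^sub>R (ustar - u))) om) + psi (u + t *\<^sub>R (ustar - u))"
          unfolding u_def using uN_opt[OF N] by (simp add: u_def)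
        then have "Fhat N xis f (B u) om + p u \<le> Fhat N xis f (B (u + t *\<^sub>R (ustar - u))) om + p (u + t *\<^sub>R (ustar - u))"
          using psi_p[OF udom] psi_p[OF ut(1)] by simp
        with ut(2) show "- (p ustar - p u) * t \<le> Fhat N xis f (B (u + t *\<^sub>R (ustar - u))) om - Fhat N xis f (B (u + 0 *\<^sub>R (ustar - u))) om"
          by (simp add: algebra_simps)
      qed
      then show ?thesis by simp
    qed
    have mono: "0 \<le> inner (gN u - gN ustar) (u - ustar)"
    proof -
      have each: "0 \<le> inner (Dg x u - Dg x ustar) (u - ustar)" for x
      proof -
        have "f (B u) x + inner (Dg x u) (ustar - u) \<le> f (B ustar) x" by (rule g_tan[OF uU0 usU0])
        moreover have "f (B ustar) x + inner (Dg x ustar) (u - ustar) \<le> f (B u) x" by (rule g_tan[OF usU0 uU0])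
        moreover have "inner (Dg x u) (ustar - u) = - inner (Dg x u) (u - ustar)" by (simp add: inner_diff_right)
        ultimately show ?thesis by (simp add: inner_diff_left)
      qed
      have "gN u - gN ustar = (1 / real N) *\<^sub>R (\<Sum>i\<in>{1..N}. Dg (xis i om) u - Dg (xis i om) ustar)"
        unfolding gN_def by (simp only: sum_subtractf scaleR_diff_right)
      then have "inner (gN u - gN ustar) (u - ustar) = (1 / real N) * (\<Sum>i\<in>{1..N}. inner (Dg (xis i om) u - Dg (xis i om) ustar) (u - ustar))"
        by (simp only: inner_scaleR_left inner_sum_left)
      also have "\<dots> \<ge> 0" using each by (intro mult_nonneg_nonneg sum_nonneg) auto
      finally show ?thesis .
    qed
    have gs_eq: "gN ustar = jV (kH (hbar N om))"
      by (simp add: gN_def hbar_def hg_repr[symmetric] jV.scaleR kH.scaleR jV.sum kH.sum)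
    define cE where "cE = \<bar>CH\<bar> * norm (hbar N om - m)"
    have cE0: "cE \<ge> 0" by (simp add: cE_def)
    have e: "\<bar>inner (gN ustar - gF ustar) w\<bar> \<le> cE * norm (iU w)" for w
    proof -
      have "gN ustar - gF ustar = jV (kH (hbar N om - m))" by (simp add: gs_eq a_eq jV.diff kH.diff)
      then have "\<bar>inner (gN ustar - gF ustar) w\<bar> \<le> norm (kH (hbar N om - m)) * norm (iU w)" using pairing by simp
      also have "\<dots> \<le> cE * norm (iU w)"
      proof (rule mult_right_mono)
        have "CH * norm (hbar N om - m) \<le> \<bar>CH\<bar> * norm (hbar N om - m)" by (intro mult_right_mono) auto
        then show "norm (kH (hbar N om - m)) \<le> cE" using kH_const[of "hbar N om - m"] unfolding cE_def by linarith
      qed simp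
      finally show ?thesis .
    qed
    have key: "inner (gF u) (u - v) + p u - p v \<le> K * cE\<^sup>2" if v: "v \<in> edom psi" for v
      unfolding K_def
      by (rule key_alg[OF iU_emb(1) theta_pos L_pos cE0 udom v growth_r VI mono e lipF[OF udom]])
    have cEsq: "cE\<^sup>2 = CH\<^sup>2 * (norm (hbar N om - m))\<^sup>2" by (simp add: cE_def power_mult_distrib)
    have second: "Psi_crit P xi Dwf B psi u \<le> ereal (K * CH\<^sup>2 * (norm (hbar N om - m))\<^sup>2)"
      unfolding Psi_crit_def
    proof (rule SUP_least)
      fix v assume v: "v \<in> edom psi"
      have "ereal (inner (adj B (DFexp P xi Dwf (B u))) (u - v)) + psi u - psi v = ereal (inner (gF u) (u - v) + p u - p v)"
        using psi_p[OF v] psi_p[OF udom] by (simp add: gF_def)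
      also have "\<dots> \<le> ereal (K * CH\<^sup>2 * (norm (hbar N om - m))\<^sup>2)" using key[OF v] cEsq by (simp add: mult.assoc)
      finally show "ereal (inner (adj B (DFexp P xi Dwf (B u))) (u - v)) + psi u - psi v \<le> ereal (K * CH\<^sup>2 * (norm (hbar N om - m))\<^sup>2)" .
    qed
    have first: "Gobj P xi f B psi u - Gobj P xi f B psi ustar \<le> Psi_crit P xi Dwf B psi u"
    proof -
      have tan: "Fexp P xi f (B u) + inner (gF u) (ustar - u) \<le> Fexp P xi f (B ustar)" by (rule F_tan[OF udom usU0])
      have "Gobj P xi f B psi u - Gobj P xi f B psi ustar = ereal (Fexp P xi f (B u) + p u - (Fexp P xi f (B ustar) + p ustar))"
        using psi_p[OF udom] psi_p[OF ustar_dom] by (simp add: Gobj_def)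
      also have "\<dots> \<le> ereal (inner (gF u) (u - ustar) + p u - p ustar)"
        using tan by (simp add: inner_diff_right)
      also have "\<dots> = ereal (inner (adj B (DFexp P xi Dwf (B u))) (u - ustar)) + psi u - psi ustar"
        using psi_p[OF udom] psi_p[OF ustar_dom] by (simp add: gF_def)
      also have "\<dots> \<le> Psi_crit P xi Dwf B psi u"
        unfolding Psi_crit_def by (rule SUP_upper[OF ustar_dom])
      finally show ?thesis .
    qed
    show ?thesis using first second by (simp add: u_def)
  qed
  show ?thesis
  proof (intro allI impI conjI)
    fix N :: nat assume N: "N \<ge> 1"
    show "(\<integral>\<^sup>+om. e2ennreal (Gobj P xi f B psi (uN N om) - Gobj P xi f B psi ustar) \<partial>P)
       \<le> (\<integral>\<^sup>+om. e2ennreal (Psi_crit P xi Dwf B psi (uN N om)) \<partial>P)"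
      using pointwise[OF N] by (intro nn_integral_mono e2ennreal_mono) auto
    have var1: "integrable P (\<lambda>om. (norm (hbar N om - m))\<^sup>2)"
      unfolding hbar_def m_def
      by (rule variance_of_mean(1)[OF prob xi_meas xis_meas xis_indep xis_distr hg_int hg_var N])
    have var2: "(\<integral>om. (norm (hbar N om - m))\<^sup>2 \<partial>P) = sigma\<^sup>2 / real N"
    proof -
      have s0: "0 \<le> (\<integral>om. (norm (hg (xi om) - (\<integral>om'. hg (xi om') \<partial>P)))\<^sup>2 \<partial>P)" by simp
      have "(\<integral>om. (norm (hbar N om - m))\<^sup>2 \<partial>P) = (\<integral>om. (norm (hg (xi om) - (\<integral>om'. hg (xi om') \<partial>P)))\<^sup>2 \<partial>P) / real N"
        unfolding hbar_def m_def
        by (rule variance_of_mean(2)[OF prob xi_meas xis_meas xis_indep xis_distr hg_int hg_var N])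
      also have "\<dots> = sigma\<^sup>2 / real N" using s0 by (simp add: sigma_def)
      finally show ?thesis .
    qed
    have "(\<integral>\<^sup>+om. e2ennreal (Psi_crit P xi Dwf B psi (uN N om)) \<partial>P)
        \<le> (\<integral>\<^sup>+om. ennreal (K * CH\<^sup>2 * (norm (hbar N om - m))\<^sup>2) \<partial>P)"
    proof (rule nn_integral_mono)
      fix om
      have "e2ennreal (Psi_crit P xi Dwf B psi (uN N om)) \<le> e2ennreal (ereal (K * CH\<^sup>2 * (norm (hbar N om - m))\<^sup>2))"
        using pointwise[OF N, of om] by (intro e2ennreal_mono) auto
      then show "e2ennreal (Psi_crit P xi Dwf B psi (uN N om)) \<le> ennreal (K * CH\<^sup>2 * (norm (hbar N om - m))\<^sup>2)"
        by simp
    qed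
    also have "\<dots> = ennreal (\<integral>om. K * CH\<^sup>2 * (norm (hbar N om - m))\<^sup>2 \<partial>P)"
      using var1 K0 by (intro nn_integral_eq_integral) auto
    also have "\<dots> = ennreal (K * CH\<^sup>2 * sigma\<^sup>2 / real N)"
      using var2 by simp
    finally show "(\<integral>\<^sup>+om. e2ennreal (Psi_crit P xi Dwf B psi (uN N om)) \<partial>P)
       \<le> ennreal ((1 + (1 / theta + L / theta\<^sup>2)\<^sup>2 + 4 * L\<^sup>2 / theta\<^sup>2) * CH\<^sup>2 * sigma\<^sup>2 / real N)"
      by (simp add: K_def)
  qed
qed

end
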